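(* Let $\mathcal{M}$ be a finite set of models, each model $\mathfrak{m}$ consisting of at most $Q$ features, with prior $p(\mathfrak{m})$ and marginal likelihood $p(\boldsymbol{y}\mid\mathfrak{m})>0$, and posterior $p(\mathfrak{m}\mid\boldsymbol{y}) = p(\mathfrak{m})p(\boldsymbol{y}\mid\mathfrak{m})/\sum_{\mathfrak{m}'\in\mathcal{M}}p(\mathfrak{m}')p(\boldsymbol{y}\mid\mathfrak{m}')$. Run the GMJMCMC algorithm for $T_{\max}$ population iterations, producing populations $\mathcal{S}_1,\dots,\mathcal{S}_{T_{\max}}$, each a set of $s$ features, and let $M_{\mathcal{S}_t}$ be the set of models visited at iteration $t$ within search space $\mathcal{S}_t$. Let $\mathcal{M}^*$ be the set of all models visited by the algorithm and define \[ \widehat{p}(\mathfrak{m}\mid\boldsymbol{y}) = \frac{p(\mathfrak{m})p(\boldsymbol{y}\mid\mathfrak{m})}{\sum_{\mathfrak{m}'\in\mathcal{M}^*}p(\mathfrak{m}')p(\boldsymbol{y}\mid\mathfrak{m}')}\,\mathrm{I}(\mathfrak{m}\in\mathcal{M}^* ). \] Assume $s\ge Q$ and that $\{(\mathcal{S}_t,M_{\mathcal{S}_t})\}_t$ forms an irreducible Markov chain over its (finite) set of possible states. Then $\widehat{p}(\mathfrak{m}\mid\boldsymbol{y})$ converges to $p(\mathfrak{m}\mid\boldsymbol{y})$ for every model $\mathfrak{m}$ as $T_{\max}\to\infty$.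
   Context: GMJMCMC (genetically modified mode jumping MCMC) is a model search algorithm: at each iteration $t$ it holds a population $\mathcal{S}_t$ of $s$ features (transformations of input covariates), runs an MCMC (mode-jumping MCMC) over the models whose features all belong to $\mathcal{S}_t$ (visiting the model set $M_{\mathcal{S}_t}$, including auxiliary models used to construct proposals), and then generates a new population $\mathcal{S}_{t+1}$ from $\mathcal{S}_t$ by random operators (filtration, mutation, modification, crossover, projection). The model space $\mathcal{M}$ consists of all subsets of at most $Q$ features from a finite feature space. A model is identified with the set of features it includes. *)

theory Defs
  imports "HOL-Probability.Probability"
begin

definition model_space :: "'f set \<Rightarrow> nat \<Rightarrow> 'f set set" where
  "model_space F Q = {m. m \<subseteq> F \<and> card m \<le> Q}"

text \<open>Renormalised posterior over a set of models Ms (zero outside Ms).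
  With Ms = the full model space this is p(m|y); with Ms = the visited
  models it is the estimator p-hat(m|y).\<close>
definition posterior ::
  "('f set \<Rightarrow> real) \<Rightarrow> ('f set \<Rightarrow> real) \<Rightarrow> 'f set set \<Rightarrow> 'f set \<Rightarrow> real" where
  "posterior prior lik Ms m =
     (if m \<in> Ms then prior m * lik m / (\<Sum>m'\<in>Ms. prior m' * lik m') else 0)"

definition visited :: "(nat \<Rightarrow> 'w \<Rightarrow> 'a \<times> 'b set) \<Rightarrow> nat \<Rightarrow> 'w \<Rightarrow> 'b set" where
  "visited X T \<omega> = (\<Union>t<T. snd (X t \<omega>))"

definition finite_markov_chain ::
  "'w measure \<Rightarrow> 's set \<Rightarrow> ('s \<Rightarrow> real) \<Rightarrow> ('s \<Rightarrow> 's \<Rightarrow> real) \<Rightarrow> (nat \<Rightarrow> 'w \<Rightarrow> 's) \<Rightarrow> bool" where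
  "finite_markov_chain \<Omega> St init K X \<longleftrightarrow>
     prob_space \<Omega> \<and> finite St \<and>
     (\<forall>t. X t \<in> measurable \<Omega> (count_space UNIV)) \<and>
     (\<forall>t. \<forall>\<omega>\<in>space \<Omega>. X t \<omega> \<in> St) \<and>
     (\<forall>x\<in>St. 0 \<le> init x) \<and> (\<Sum>x\<in>St. init x) = 1 \<and>
     (\<forall>x\<in>St. \<forall>y\<in>St. 0 \<le> K x y) \<and> (\<forall>x\<in>St. (\<Sum>y\<in>St. K x y) = 1) \<and>
     (\<forall>n xs. length xs = Suc n \<longrightarrow> set xs \<subseteq> St \<longrightarrow>
        measure \<Omega> {\<omega>\<in>space \<Omega>. \<forall>i\<le>n. X i \<omega> = xs ! i}
          = init (xs ! 0) * (\<Prod>i<n. K (xs ! i) (xs ! Suc i)))"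

definition irreducible :: "'s set \<Rightarrow> ('s \<Rightarrow> 's \<Rightarrow> real) \<Rightarrow> bool" where
  "irreducible St K \<longleftrightarrow>
     (\<forall>x\<in>St. \<forall>y\<in>St. (x, y) \<in> {(a, b). a \<in> St \<and> b \<in> St \<and> 0 < K a b}\<^sup>*)"

end

theory Submission
  imports Defs
begin

fun avoid :: "('s \<Rightarrow> 's \<Rightarrow> real) \<Rightarrow> 's set \<Rightarrow> 's \<Rightarrow> 's \<Rightarrow> nat \<Rightarrow> real" where
  "avoid K St y x 0 = 1"
| "avoid K St y x (Suc n) = (\<Sum>z\<in>St-{y}. K x z * avoid K St y z n)"

locale kern =
  fixes St :: "'s set" and K :: "'s \<Rightarrow> 's \<Rightarrow> real" and y :: 's
  assumes finSt: "finite St"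
    and Knn: "\<forall>x\<in>St. \<forall>z\<in>St. 0 \<le> K x z"
    and Ksum: "\<forall>x\<in>St. (\<Sum>z\<in>St. K x z) = 1"
begin

abbreviation "av \<equiv> avoid K St y"

lemma av_nonneg: "x \<in> St \<Longrightarrow> 0 \<le> av x n"
  by (induction n arbitrary: x) (auto intro!: sum_nonneg simp: Knn)

lemma Ksub: "x \<in> St \<Longrightarrow> (\<Sum>z\<in>St-{y}. K x z) \<le> 1"
proof -
  assume x: "x \<in> St"
  have "(\<Sum>z\<in>St-{y}. K x z) \<le> (\<Sum>z\<in>St. K x z)"
    by (rule sum_mono2) (use finSt Knn x in auto)
  then show ?thesis using Ksum x by auto
qed

lemma av_le1: "x \<in> St \<Longrightarrow> av x n \<le> 1"
proof (induction n arbitrary: x)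
  case 0 then show ?case by simp
next
  case (Suc n)
  have "av x (Suc n) \<le> (\<Sum>z\<in>St-{y}. K x z)"
    unfolding avoid.simps
    by (rule sum_mono) (use Suc Knn in \<open>auto intro: mult_left_le\<close>)
  then show ?case using Ksub[OF Suc.prems] by linarith
qed

lemma av_Suc_le: "x \<in> St \<Longrightarrow> av x (Suc n) \<le> av x n"
proof (induction n arbitrary: x)
  case 0 then show ?case using av_le1[of x 1] by simp
next
  case (Suc n)
  show ?case
    unfolding avoid.simps
    by (rule sum_mono) (use Suc Knn in \<open>auto intro: mult_left_mono\<close>)
qed

lemma av_mono: assumes "x \<in> St" "n \<le> m" shows "av x m \<le> av x n"
  using assms(2)
proof (induction m rule: dec_induct)
  case base then show ?case by simp
next
  case (step k) then show ?case using av_Suc_le[of x k] assms(1) by linarith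
qed

lemma av_mult:
  assumes c: "\<forall>z\<in>St-{y}. av z n \<le> c" "0 \<le> c"
  shows "x \<in> St - {y} \<Longrightarrow> av x (m + n) \<le> av x m * c"
proof (induction m arbitrary: x)
  case 0 then show ?case using c by simp
next
  case (Suc m)
  have "av x (Suc m + n) = (\<Sum>z\<in>St-{y}. K x z * av z (m + n))" by simp
  also have "\<dots> \<le> (\<Sum>z\<in>St-{y}. K x z * (av z m * c))"
    by (rule sum_mono) (use Suc Knn in \<open>auto intro: mult_left_mono\<close>)
  also have "\<dots> = av x (Suc m) * c" by (simp add: sum_distrib_right mult.assoc)
  finally show ?case .
qed

lemma av_pow:
  assumes c: "\<forall>z\<in>St-{y}. av z L \<le> c" "0 \<le> c"
  shows "x \<in> St - {y} \<Longrightarrow> av x (j * L) \<le> c ^ j"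
proof (induction j arbitrary: x)
  case 0 then show ?case by simp
next
  case (Suc j)
  have "av x (L + j * L) \<le> av x L * c ^ j"
    by (rule av_mult) (use Suc c in auto)
  also have "\<dots> \<le> c * c ^ j"
    by (rule mult_right_mono) (use Suc c in auto)
  finally show ?case by (simp add: add.commute)
qed

lemma reach_lt1:
  assumes "(x, y) \<in> {(a, b). a \<in> St \<and> b \<in> St \<and> 0 < K a b}\<^sup>*"
  shows "x = y \<or> (\<exists>k. av x k < 1)"
  using assms
proof (induction rule: converse_rtrancl_induct)
  case base then show ?case by simp
next
  case (step x z)
  then have x: "x \<in> St" and z: "z \<in> St" and Kp: "0 < K x z" by auto
  show ?case
  proof (cases "z = y")
    case True
    have "av x 1 = (\<Sum>w\<in>St-{y}. K x w)" by simp
    also have "\<dots> = 1 - K x y" using sum_diff1[of St "K x" y] finSt Ksum x z True by simp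
    finally have "av x 1 < 1" using Kp True by simp
    then show ?thesis by blast
  next
    case False
    with step obtain k where k: "av z k < 1" by auto
    have "av x (Suc k) < (\<Sum>w\<in>St-{y}. K x w)"
      unfolding avoid.simps
    proof (rule sum_strict_mono_ex1)
      show "finite (St - {y})" using finSt by simp
      show "\<forall>w\<in>St - {y}. K x w * av w k \<le> K x w"
        using Knn x av_le1 by (auto intro: mult_left_le)
      show "\<exists>w\<in>St - {y}. K x w * av w k < K x w"
        using z False Kp k by (intro bexI[of _ z]) auto
    qed
    then show ?thesis using Ksub[OF x] by (intro disjI2 exI[of _ "Suc k"]) linarith
  qed
qed


lemma uniform:
  assumes irr: "irreducible St K" and yS: "y \<in> St"
  shows "\<exists>L c. 0 \<le> c \<and> c < 1 \<and> (\<forall>x\<in>St-{y}. av x L \<le> c)"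
proof -
  have "\<forall>x\<in>St-{y}. \<exists>k. av x k < 1"
    using reach_lt1 irr yS unfolding irreducible_def by blast
  then obtain k where k: "\<forall>x\<in>St-{y}. av x (k x) < 1" by metis
  define L where "L = Max (insert 0 (k ` (St-{y})))"
  define c where "c = Max (insert 0 ((\<lambda>x. av x L) ` (St - {y})))"
  have fin: "finite (St - {y})" using finSt by simp
  have "\<forall>x\<in>St-{y}. av x L \<le> c" unfolding c_def using fin by (auto intro: Max_ge)
  moreover have "0 \<le> c" unfolding c_def using fin by (auto intro: Max_ge)
  moreover have "c < 1"
  proof -
    have "\<forall>x\<in>St-{y}. av x L < 1"
    proof
      fix x assume x: "x \<in> St - {y}"
      have "k x \<le> L" unfolding L_def using fin x by (auto intro: Max_ge)
      then have "av x L \<le> av x (k x)" using av_mono x by auto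
      moreover have "av x (k x) < 1" using k x by blast
      ultimately show "av x L < 1" by linarith
    qed
    then show ?thesis unfolding c_def using fin by (subst Max_less_iff) auto
  qed
  ultimately show ?thesis by blast
qed

end

definition pw :: "('s \<Rightarrow> 's \<Rightarrow> real) \<Rightarrow> 's list \<Rightarrow> real" where
  "pw K xs = (\<Prod>i<length xs - 1. K (xs ! i) (xs ! Suc i))"

lemma pw_snoc: "ps \<noteq> [] \<Longrightarrow> pw K (ps @ [z]) = pw K ps * K (last ps) z"
proof -
  assume ps: "ps \<noteq> []"
  then obtain m where m: "length ps = Suc m" by (cases ps) auto
  have "pw K (ps @ [z]) = (\<Prod>i<Suc m. K ((ps@[z]) ! i) ((ps@[z]) ! Suc i))"
    unfolding pw_def using m by simp
  also have "\<dots> = (\<Prod>i<m. K ((ps@[z]) ! i) ((ps@[z]) ! Suc i)) * K (last ps) z"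
    using m ps by (simp add: nth_append last_conv_nth)
  also have "(\<Prod>i<m. K ((ps@[z]) ! i) ((ps@[z]) ! Suc i)) = pw K ps"
    unfolding pw_def using m by (auto intro!: prod.cong simp: nth_append)
  finally show ?thesis .
qed

locale mc = kern St K y for St :: "'s set" and K y +
  fixes \<Omega> :: "'w measure" and init X
  assumes fmc: "finite_markov_chain \<Omega> St init K X"
begin

lemma ps: "prob_space \<Omega>" using fmc unfolding finite_markov_chain_def by blast
lemma Xm[measurable]: "X t \<in> measurable \<Omega> (count_space UNIV)"
  using fmc unfolding finite_markov_chain_def by blast
lemma XSt: "\<omega> \<in> space \<Omega> \<Longrightarrow> X t \<omega> \<in> St"
  using fmc unfolding finite_markov_chain_def by blast
lemma init_nn: "x \<in> St \<Longrightarrow> 0 \<le> init x"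
  using fmc unfolding finite_markov_chain_def by blast
lemma init_sum: "(\<Sum>x\<in>St. init x) = 1"
  using fmc unfolding finite_markov_chain_def by blast
lemma fdd: "length xs = Suc n \<Longrightarrow> set xs \<subseteq> St \<Longrightarrow>
    measure \<Omega> {\<omega>\<in>space \<Omega>. \<forall>i\<le>n. X i \<omega> = xs ! i} = init (xs ! 0) * (\<Prod>i<n. K (xs ! i) (xs ! Suc i))"
  using fmc unfolding finite_markov_chain_def by blast

interpretation P: prob_space \<Omega> by (rule ps)

definition ev :: "'s list \<Rightarrow> nat \<Rightarrow> 'w set" where
  "ev ps n = {\<omega>\<in>space \<Omega>. (\<forall>i<length ps. X i \<omega> = ps ! i) \<and>
      (\<forall>i. length ps \<le> i \<and> i < length ps + n \<longrightarrow> X i \<omega> \<noteq> y)}"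

lemma ev_sets[measurable]: "ev ps n \<in> sets \<Omega>"
  unfolding ev_def by measurable


lemma ev_Suc: "ev ps (Suc n) = (\<Union>z\<in>St-{y}. ev (ps @ [z]) n)"
proof (intro set_eqI iffI)
  fix \<omega> assume w: "\<omega> \<in> ev ps (Suc n)"
  then have sp: "\<omega> \<in> space \<Omega>" unfolding ev_def by auto
  let ?z = "X (length ps) \<omega>"
  have "?z \<in> St - {y}" using w XSt[OF sp] unfolding ev_def by auto
  moreover have "\<omega> \<in> ev (ps @ [?z]) n"
    using w unfolding ev_def by (auto simp: nth_append less_Suc_eq)
  ultimately show "\<omega> \<in> (\<Union>z\<in>St-{y}. ev (ps @ [z]) n)" by blast
next
  fix \<omega> assume "\<omega> \<in> (\<Union>z\<in>St-{y}. ev (ps @ [z]) n)"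
  then obtain z where z: "z \<in> St - {y}" and w: "\<omega> \<in> ev (ps @ [z]) n" by blast
  have sp: "\<omega> \<in> space \<Omega>" and a: "\<forall>i<length ps. X i \<omega> = ps ! i" and b: "X (length ps) \<omega> = z"
    and c: "\<forall>i. Suc (length ps) \<le> i \<and> i < Suc (length ps) + n \<longrightarrow> X i \<omega> \<noteq> y"
  proof -
    have w': "\<omega> \<in> space \<Omega>" "\<forall>i<Suc (length ps). X i \<omega> = (ps @ [z]) ! i"
      "\<forall>i. Suc (length ps) \<le> i \<and> i < Suc (length ps) + n \<longrightarrow> X i \<omega> \<noteq> y"
      using w unfolding ev_def by auto
    show "\<omega> \<in> space \<Omega>" using w' by blast
    show "\<forall>i<length ps. X i \<omega> = ps ! i" using w'(2) by (simp add: nth_append)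
    show "X (length ps) \<omega> = z" using w'(2) by simp
    show "\<forall>i. Suc (length ps) \<le> i \<and> i < Suc (length ps) + n \<longrightarrow> X i \<omega> \<noteq> y" using w'(3) by blast
  qed
  have d: "X i \<omega> \<noteq> y" if "length ps \<le> i" "i < length ps + Suc n" for i
  proof (cases "i = length ps")
    case True then show ?thesis using b z by simp
  next
    case False then show ?thesis using c that by simp
  qed
  show "\<omega> \<in> ev ps (Suc n)"
    unfolding ev_def using sp a d by blast
qed

lemma meas_ev: "ps \<noteq> [] \<Longrightarrow> set ps \<subseteq> St \<Longrightarrow>
    measure \<Omega> (ev ps n) = init (hd ps) * pw K ps * av (last ps) n"
proof (induction n arbitrary: ps)
  case 0
  then obtain m where m: "length ps = Suc m" by (cases ps) auto
  have "ev ps 0 = {\<omega>\<in>space \<Omega>. \<forall>i\<le>m. X i \<omega> = ps ! i}"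
    unfolding ev_def using m by (auto simp: less_Suc_eq_le)
  then show ?case using fdd[OF m 0(2)] 0(1) m by (simp add: pw_def hd_conv_nth)
next
  case (Suc n)
  have "measure \<Omega> (ev ps (Suc n)) = (\<Sum>z\<in>St-{y}. measure \<Omega> (ev (ps @ [z]) n))"
    unfolding ev_Suc
  proof (rule P.finite_measure_finite_Union)
    show "finite (St - {y})" using finSt by simp
    show "(\<lambda>z. ev (ps @ [z]) n) ` (St - {y}) \<subseteq> sets \<Omega>" by auto
    show "disjoint_family_on (\<lambda>z. ev (ps @ [z]) n) (St - {y})"
      unfolding disjoint_family_on_def ev_def by (auto simp: nth_append)
  qed
  also have "\<dots> = (\<Sum>z\<in>St-{y}. init (hd ps) * pw K ps * (K (last ps) z * av z n))"
    using Suc by (intro sum.cong) (auto simp: pw_snoc)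
  also have "\<dots> = init (hd ps) * pw K ps * av (last ps) (Suc n)"
    by (simp add: sum_distrib_left)
  finally show ?case .
qed


lemma hit:
  assumes irr: "irreducible St K" and yS: "y \<in> St"
  shows "AE \<omega> in \<Omega>. \<exists>t. X t \<omega> = y"
proof -
  obtain L c where c0: "0 \<le> c" and c1: "c < 1" and cL: "\<forall>x\<in>St-{y}. av x L \<le> c"
    using uniform[OF irr yS] by blast
  define N where "N = {\<omega>\<in>space \<Omega>. \<forall>i. X i \<omega> \<noteq> y}"
  have Nsets: "N \<in> sets \<Omega>" unfolding N_def by measurable
  have bound: "measure \<Omega> N \<le> c ^ j" for j
  proof -
    have "N \<subseteq> (\<Union>x\<in>St-{y}. ev [x] (j * L))"
    proof
      fix \<omega> assume w: "\<omega> \<in> N"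
      then have sp: "\<omega> \<in> space \<Omega>" unfolding N_def by auto
      have "X 0 \<omega> \<in> St - {y}" using w XSt[OF sp] unfolding N_def by auto
      moreover have "\<omega> \<in> ev [X 0 \<omega>] (j * L)" using w unfolding N_def ev_def by auto
      ultimately show "\<omega> \<in> (\<Union>x\<in>St-{y}. ev [x] (j * L))" by blast
    qed
    then have "measure \<Omega> N \<le> measure \<Omega> (\<Union>x\<in>St-{y}. ev [x] (j * L))"
      using finSt by (intro P.finite_measure_mono) (auto intro!: sets.finite_UN)
    also have "\<dots> \<le> (\<Sum>x\<in>St-{y}. measure \<Omega> (ev [x] (j * L)))"
      by (rule P.finite_measure_subadditive_finite) (use finSt in auto)
    also have "\<dots> = (\<Sum>x\<in>St-{y}. init x * av x (j * L))"
      using yS by (intro sum.cong) (auto simp: meas_ev pw_def)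
    also have "\<dots> \<le> (\<Sum>x\<in>St-{y}. init x * c ^ j)"
      by (rule sum_mono) (use av_pow[OF cL c0] init_nn in \<open>auto intro: mult_left_mono\<close>)
    also have "\<dots> \<le> (\<Sum>x\<in>St. init x * c ^ j)"
      by (rule sum_mono2) (use finSt init_nn c0 in auto)
    also have "\<dots> = c ^ j" using init_sum by (simp add: sum_distrib_right[symmetric])
    finally show ?thesis .
  qed
  have "(\<lambda>j. c ^ j) \<longlonglongrightarrow> 0" using c0 c1 by (intro LIMSEQ_power_zero) simp
  then have "measure \<Omega> N \<le> 0" using bound by (intro LIMSEQ_le_const) auto
  then have "emeasure \<Omega> N = 0" using P.emeasure_eq_measure[of N] measure_nonneg[of \<Omega> N] by simp
  then have "N \<in> null_sets \<Omega>" using Nsets by auto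
  then show ?thesis by (rule AE_I') (auto simp: N_def)
qed

end

lemma mcI: "finite_markov_chain \<Omega> St init K X \<Longrightarrow> mc St K \<Omega> init X"
  unfolding mc_def kern_def mc_axioms_def finite_markov_chain_def by blast

lemma hit_all:
  assumes "finite_markov_chain \<Omega> St init K X" "irreducible St K"
  shows "AE \<omega> in \<Omega>. \<forall>y\<in>St. \<exists>t. X t \<omega> = y"
proof (rule AE_finite_allI)
  show "finite St" using assms(1) unfolding finite_markov_chain_def by blast
  fix y assume "y \<in> St"
  then show "AE \<omega> in \<Omega>. \<exists>t. X t \<omega> = y"
    using mc.hit[OF mcI[OF assms(1)] assms(2)] by blast
qed

theorem theorem1:
  fixes F :: "'f set" and Q s :: nat
    and prior lik :: "'f set \<Rightarrow> real"
    and \<Omega> :: "'w measure"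
    and St :: "('f set \<times> 'f set set) set"
    and init :: "'f set \<times> 'f set set \<Rightarrow> real"
    and K :: "'f set \<times> 'f set set \<Rightarrow> 'f set \<times> 'f set set \<Rightarrow> real"
    and X :: "nat \<Rightarrow> 'w \<Rightarrow> 'f set \<times> 'f set set"
  assumes finF: "finite F"
    and prior_nonneg: "\<forall>m\<in>model_space F Q. 0 \<le> prior m"
    and prior_sum: "(\<Sum>m\<in>model_space F Q. prior m) = 1"
    and lik_pos: "\<forall>m\<in>model_space F Q. 0 < lik m"
    and sQ: "s \<ge> Q"
    and states: "\<forall>(S, M)\<in>St. S \<subseteq> F \<and> card S = s \<and> M \<subseteq> {m\<in>model_space F Q. m \<subseteq> S}"
    and coverage: "\<forall>S. S \<subseteq> F \<and> card S = s \<longrightarrow>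
                     (\<forall>m. m \<subseteq> S \<and> card m \<le> Q \<longrightarrow> (\<exists>M. (S, M) \<in> St \<and> m \<in> M))"
    and chain: "finite_markov_chain \<Omega> St init K X"
    and irred: "irreducible St K"
  shows "AE \<omega> in \<Omega>. \<forall>m\<in>model_space F Q.
           (\<lambda>T. posterior prior lik (visited X T \<omega>) m)
             \<longlonglongrightarrow> posterior prior lik (model_space F Q) m"
proof -
  have finSt: "finite St" using chain unfolding finite_markov_chain_def by blast
  have XSt: "\<And>t \<omega>. \<omega> \<in> space \<Omega> \<Longrightarrow> X t \<omega> \<in> St"
    using chain unfolding finite_markov_chain_def by blast
  have "(\<Sum>x\<in>St. init x) = 1" using chain unfolding finite_markov_chain_def by blast
  then have "St \<noteq> {}" by auto
  then obtain S0 M0 where S0: "(S0, M0) \<in> St" by auto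
  then have "S0 \<subseteq> F" "card S0 = s" using states by auto
  then have sF: "s \<le> card F" using card_mono[OF finF \<open>S0 \<subseteq> F\<close>] \<open>card S0 = s\<close> by simp
  have ext: "\<exists>S M. (S, M) \<in> St \<and> m \<in> M" if m: "m \<in> model_space F Q" for m
  proof -
    have mF: "m \<subseteq> F" and mQ: "card m \<le> Q" using m unfolding model_space_def by auto
    have finm: "finite m" using mF finF finite_subset by blast
    have "s - card m \<le> card (F - m)" using sF card_Diff_subset[OF finm mF] by simp
    then obtain B where B: "B \<subseteq> F - m" "card B = s - card m" "finite B"
      by (rule obtain_subset_with_card_n)
    have "card (m \<union> B) = s" using B finm mQ sQ by (subst card_Un_disjoint) auto
    moreover have "m \<union> B \<subseteq> F" using B mF by auto
    ultimately show ?thesis using coverage[rule_format, of "m \<union> B" m] mQ by auto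
  qed
  have vis_eq: "eventually (\<lambda>T. visited X T \<omega> = model_space F Q) sequentially"
    if sp: "\<omega> \<in> space \<Omega>" and h: "\<forall>y\<in>St. \<exists>t. X t \<omega> = y" for \<omega>
  proof -
    from h obtain tt where tt: "\<forall>y\<in>St. X (tt y) \<omega> = y" by metis
    define T0 where "T0 = Suc (Max (tt ` St))"
    have "visited X T \<omega> = model_space F Q" if T: "T \<ge> T0" for T
    proof
      show "visited X T \<omega> \<subseteq> model_space F Q"
      proof
        fix m assume "m \<in> visited X T \<omega>"
        then obtain t where "m \<in> snd (X t \<omega>)" unfolding visited_def by blast
        moreover obtain S M where SM: "X t \<omega> = (S, M)" by (cases "X t \<omega>")
        moreover have "(S, M) \<in> St" using XSt[OF sp, of t] SM by simp
        ultimately show "m \<in> model_space F Q" using states by auto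
      qed
      show "model_space F Q \<subseteq> visited X T \<omega>"
      proof
        fix m assume "m \<in> model_space F Q"
        then obtain S M where SM: "(S, M) \<in> St" "m \<in> M" using ext by blast
        have "tt (S, M) \<le> Max (tt ` St)" using finSt SM(1) by (intro Max_ge) auto
        then have "tt (S, M) < T" using T unfolding T0_def by simp
        then show "m \<in> visited X T \<omega>" unfolding visited_def using tt SM
          by (auto intro!: bexI[of _ "tt (S, M)"])
      qed
    qed
    then show ?thesis unfolding eventually_sequentially by blast
  qed
  show ?thesis
    using AE_space hit_all[OF chain irred]
  proof eventually_elim
    case (elim \<omega>)
    show ?case
    proof
      fix m assume "m \<in> model_space F Q"
      have "eventually (\<lambda>T. posterior prior lik (model_space F Q) m =
          posterior prior lik (visited X T \<omega>) m) sequentially"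
        using vis_eq[OF elim] by eventually_elim simp
      then show "(\<lambda>T. posterior prior lik (visited X T \<omega>) m)
             \<longlonglongrightarrow> posterior prior lik (model_space F Q) m"
        by (rule Lim_transform_eventually[OF tendsto_const])
    qed
  qed
qed

end
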